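(* Let $\tilde{\mathbb{P}}$ be a probability measure under which $X_1,\ldots,X_n$ are i.i.d. positive-integer-valued random variables such that, for each $i$, the events $\{p\mid X_i\}$, $p\in\mathcal{P}$, $p\le n$, are mutually independent with $\tilde{\mathbb{P}}(p\mid X_i)=1/p$. For a prime $p$ let $Y_p:=\#\{1\le i\le n: p\mid X_i\}$, and for $k_1<k_2$ let $S(k_1,k_2):=\{p\in\mathcal{P}:k_1<p\le k_2\}$. Then for every $\epsilon>0$, for all sufficiently large $k$ and all sufficiently large $n$ (depending on $k,\epsilon$), \[ \frac{1}{n}\log\tilde{\mathbb{P}}\left(\sum_{p\in S(k,n)}Y_{p}^{2}>n^{2}\epsilon\right)\leq-\frac{\epsilon}{8}\log(k)+4. \] Consequently, for every $\epsilon>0$, \[ \limsup_{k\to\infty}\limsup_{n\to\infty}\frac{1}{n}\log\tilde{\mathbb{P}}\left(\sum_{p\in S(k,n)}Y_{p}^{2}>n^{2}\epsilon\right)=-\infty. \]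
   Context: $\mathcal{P}$ denotes the set of primes. *)

theory Defs
  imports "HOL-Probability.Probability" "HOL-Computational_Algebra.Primes"
begin

definition tilde_model :: "nat \<Rightarrow> 'a measure \<Rightarrow> (nat \<Rightarrow> 'a \<Rightarrow> nat) \<Rightarrow> bool" where
  "tilde_model n M X \<longleftrightarrow>
     prob_space M \<and>
     prob_space.indep_vars M (\<lambda>_. count_space UNIV) X {1..n} \<and>
     (\<forall>i\<in>{1..n}. distr M (count_space UNIV) (X i) = distr M (count_space UNIV) (X 1)) \<and>
     (\<forall>i\<in>{1..n}. AE \<omega> in M. X i \<omega> \<ge> 1) \<and>
     (\<forall>i\<in>{1..n}.
        prob_space.indep_events M (\<lambda>p. {\<omega>\<in>space M. p dvd X i \<omega>}) {p. prime p \<and> p \<le> n} \<and>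
        (\<forall>p. prime p \<and> p \<le> n \<longrightarrow> measure M {\<omega>\<in>space M. p dvd X i \<omega>} = 1 / real p))"

definition Ycount :: "nat \<Rightarrow> (nat \<Rightarrow> 'a \<Rightarrow> nat) \<Rightarrow> nat \<Rightarrow> 'a \<Rightarrow> nat" where
  "Ycount n X p \<omega> = card {i\<in>{1..n}. p dvd X i \<omega>}"

definition Sprimes :: "nat \<Rightarrow> nat \<Rightarrow> nat set" where
  "Sprimes k1 k2 = {p. prime p \<and> k1 < p \<and> p \<le> k2}"

definition big_event :: "nat \<Rightarrow> nat \<Rightarrow> real \<Rightarrow> 'a measure \<Rightarrow> (nat \<Rightarrow> 'a \<Rightarrow> nat) \<Rightarrow> 'a set" where
  "big_event n k \<epsilon> M X =
     {\<omega>\<in>space M. (\<Sum>p\<in>Sprimes k n. real (Ycount n X p \<omega>) ^ 2) > real n ^ 2 * \<epsilon>}"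

definition eln :: "real \<Rightarrow> ereal" where
  "eln x = (if x = 0 then -\<infinity> else ereal (ln x))"

end

theory Submission
  imports Defs "HOL-Real_Asymp.Real_Asymp"
begin


lemma (in prob_space) indep_events_prod_integral:
  fixes c :: "'i \<Rightarrow> real"
  assumes ind: "indep_events F I" and JI: "J \<subseteq> I" and fin: "finite J"
  shows "(\<integral>\<omega>. (\<Prod>p\<in>J. 1 + c p * indicator (F p) \<omega>) \<partial>M) = (\<Prod>p\<in>J. 1 + c p * prob (F p))"
proof -
  have ev: "\<And>p. p \<in> J \<Longrightarrow> F p \<in> events" using ind JI by (auto simp: indep_events_def)
  have key: "\<And>T. T \<subseteq> J \<Longrightarrow> (\<integral>\<omega>. (\<Prod>p\<in>T. indicator (F p) \<omega>) \<partial>M) = (\<Prod>p\<in>T. prob (F p))"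
  proof -
    fix T assume TJ: "T \<subseteq> J"
    show "(\<integral>\<omega>. (\<Prod>p\<in>T. indicator (F p) \<omega>) \<partial>M) = (\<Prod>p\<in>T. prob (F p))"
    proof (cases "T = {}")
      case True then show ?thesis by (simp add: prob_space)
    next
      case False
      have fT: "finite T" using fin TJ finite_subset by blast
      have "(\<integral>\<omega>. (\<Prod>p\<in>T. indicator (F p) \<omega> :: real) \<partial>M) = (\<integral>\<omega>. indicator (\<Inter>p\<in>T. F p) \<omega> \<partial>M)"
      proof (rule Bochner_Integration.integral_cong)
        fix \<omega> assume "\<omega> \<in> space M"
        show "(\<Prod>p\<in>T. indicator (F p) \<omega>) = (indicator (\<Inter>p\<in>T. F p) \<omega> :: real)"
        proof (cases "\<forall>p\<in>T. \<omega> \<in> F p")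
          case True then show ?thesis by (simp add: indicator_def)
        next
          case False
          then obtain p where "p \<in> T" "\<omega> \<notin> F p" by blast
          then have "(\<Prod>p\<in>T. indicator (F p) \<omega>) = (0::real)"
            using fT by (intro prod_zero bexI[of _ p]) (auto simp: indicator_def)
          then show ?thesis using False by (simp add: indicator_def)
        qed
      qed simp
      also have "\<dots> = prob (\<Inter>p\<in>T. F p)"
      proof -
        obtain p0 where "p0 \<in> T" using False by blast
        then have "(\<Inter>p\<in>T. F p) \<subseteq> space M" using ev TJ sets.sets_into_space by blast
        then show ?thesis by (simp add: Int_absorb2)
      qed
      also have "\<dots> = (\<Prod>p\<in>T. prob (F p))"
        using ind JI TJ False fT by (auto simp: indep_events_def)
      finally show ?thesis .
    qed
  qed
  have int: "\<And>T. T \<subseteq> J \<Longrightarrow> integrable M (\<lambda>\<omega>. (\<Prod>p\<in>T. indicator (F p) \<omega>) :: real)"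
  proof -
    fix T assume TJ: "T \<subseteq> J"
    show "integrable M (\<lambda>\<omega>. (\<Prod>p\<in>T. indicator (F p) \<omega>) :: real)"
    proof (rule integrable_const_bound[where B=1])
      show "AE x in M. norm ((\<Prod>p\<in>T. indicator (F p) x) :: real) \<le> 1"
        by (intro AE_I2) (auto simp: abs_prod intro!: prod_le_1 simp: indicator_def)
      show "(\<lambda>\<omega>. (\<Prod>p\<in>T. indicator (F p) \<omega>) :: real) \<in> borel_measurable M"
        using ev TJ by (intro borel_measurable_prod) auto
    qed
  qed
  have "(\<lambda>\<omega>. (\<Prod>p\<in>J. 1 + c p * indicator (F p) \<omega>)) =
        (\<lambda>\<omega>. \<Sum>T\<in>Pow J. (\<Prod>p\<in>T. c p) * (\<Prod>p\<in>T. indicator (F p) \<omega>))"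
  proof
    fix \<omega>
    have "(\<Prod>p\<in>J. 1 + c p * indicator (F p) \<omega>) = (\<Prod>p\<in>J. c p * indicator (F p) \<omega> + 1)"
      by (simp add: add.commute)
    also have "\<dots> = (\<Sum>T\<in>Pow J. (\<Prod>p\<in>T. c p * indicator (F p) \<omega>) * (\<Prod>p\<in>J - T. 1))"
      by (rule prod_add[OF fin])
    also have "\<dots> = (\<Sum>T\<in>Pow J. (\<Prod>p\<in>T. c p) * (\<Prod>p\<in>T. indicator (F p) \<omega>))"
      by (simp add: prod.distrib)
    finally show "(\<Prod>p\<in>J. 1 + c p * indicator (F p) \<omega>) = (\<Sum>T\<in>Pow J. (\<Prod>p\<in>T. c p) * (\<Prod>p\<in>T. indicator (F p) \<omega>))" .
  qed
  then have "(\<integral>\<omega>. (\<Prod>p\<in>J. 1 + c p * indicator (F p) \<omega>) \<partial>M) =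
     (\<Sum>T\<in>Pow J. (\<Prod>p\<in>T. c p) * (\<integral>\<omega>. (\<Prod>p\<in>T. indicator (F p) \<omega>) \<partial>M))"
    using int fin by (simp add: Bochner_Integration.integral_sum)
  also have "\<dots> = (\<Sum>T\<in>Pow J. (\<Prod>p\<in>T. c p * prob (F p)) * (\<Prod>p\<in>J - T. 1))"
    using key by (simp add: prod.distrib)
  also have "\<dots> = (\<Prod>p\<in>J. c p * prob (F p) + 1)"
    by (rule prod_add[OF fin, symmetric])
  finally show ?thesis by (simp add: add.commute)
qed




lemma card_filter_sum: "finite A \<Longrightarrow> real (card {i\<in>A. P i}) = (\<Sum>i\<in>A. of_bool (P i))"
  by (simp add: sum.inter_filter[symmetric] Int_def)

lemma tilde_facts:
  assumes "tilde_model n M X"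
  shows "prob_space M" "prob_space.indep_vars M (\<lambda>_. count_space UNIV) X {1..n}"
    "\<And>i. i \<in> {1..n} \<Longrightarrow> X i \<in> measurable M (count_space UNIV)"
    "\<And>i. i \<in> {1..n} \<Longrightarrow> prob_space.indep_events M (\<lambda>p. {\<omega>\<in>space M. p dvd X i \<omega>}) {p. prime p \<and> p \<le> n}"
    "\<And>i p. i \<in> {1..n} \<Longrightarrow> prime p \<Longrightarrow> p \<le> n \<Longrightarrow> measure M {\<omega>\<in>space M. p dvd X i \<omega>} = 1 / real p"
  using assms unfolding tilde_model_def
  by (auto simp: prob_space.indep_vars_def)

lemma mgf_Y:
  assumes tm: "tilde_model n M X" and S: "S \<subseteq> {p. prime p \<and> p \<le> n}"
  shows "integrable M (\<lambda>\<omega>. exp (\<Sum>p\<in>S. \<alpha> p * real (Ycount n X p \<omega>)))"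
    and "(\<integral>\<omega>. exp (\<Sum>p\<in>S. \<alpha> p * real (Ycount n X p \<omega>)) \<partial>M) = (\<Prod>p\<in>S. (1 + (exp (\<alpha> p) - 1) / real p) ^ n)"
proof -
  interpret prob_space M using tilde_facts(1)[OF tm] .
  have fS: "finite S" using S by (rule finite_subset) auto
  define \<phi> where "\<phi> x = (\<Sum>p\<in>S. \<alpha> p * of_bool (p dvd x))" for x :: nat
  have eq: "exp (\<Sum>p\<in>S. \<alpha> p * real (Ycount n X p \<omega>)) = (\<Prod>i\<in>{1..n}. exp (\<phi> (X i \<omega>)))" for \<omega>
  proof -
    have "(\<Sum>p\<in>S. \<alpha> p * real (Ycount n X p \<omega>)) = (\<Sum>p\<in>S. \<Sum>i\<in>{1..n}. \<alpha> p * of_bool (p dvd X i \<omega>))"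
    proof (rule sum.cong[OF refl])
      fix p assume "p \<in> S"
      have "real (Ycount n X p \<omega>) = (\<Sum>i\<in>{1..n}. of_bool (p dvd X i \<omega>))"
        unfolding Ycount_def by (rule card_filter_sum) simp
      then show "\<alpha> p * real (Ycount n X p \<omega>) = (\<Sum>i\<in>{1..n}. \<alpha> p * of_bool (p dvd X i \<omega>))"
        by (simp add: sum_distrib_left)
    qed
    also have "\<dots> = (\<Sum>i\<in>{1..n}. \<phi> (X i \<omega>))"
      unfolding \<phi>_def by (rule sum.swap)
    finally show ?thesis by (simp add: exp_sum)
  qed
  have ind: "indep_vars (\<lambda>_. borel) (\<lambda>i \<omega>. exp (\<phi> (X i \<omega>))) {1..n}"
    by (rule indep_vars_compose2[OF tilde_facts(2)[OF tm]]) simp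
  have bnd: "\<bar>exp (\<phi> x)\<bar> \<le> exp (\<Sum>p\<in>S. \<bar>\<alpha> p\<bar>)" for x
  proof -
    have "\<phi> x \<le> (\<Sum>p\<in>S. \<bar>\<alpha> p\<bar>)" unfolding \<phi>_def
      by (intro sum_mono) auto
    then show ?thesis by simp
  qed
  have intg: "integrable M (\<lambda>\<omega>. exp (\<phi> (X i \<omega>)))" if "i \<in> {1..n}" for i
  proof (rule integrable_const_bound[where B="exp (\<Sum>p\<in>S. \<bar>\<alpha> p\<bar>)"])
    show "AE x in M. norm (exp (\<phi> (X i x))) \<le> exp (\<Sum>p\<in>S. \<bar>\<alpha> p\<bar>)"
      using bnd by simp
    show "(\<lambda>\<omega>. exp (\<phi> (X i \<omega>))) \<in> borel_measurable M"
      by (rule measurable_compose[OF tilde_facts(3)[OF tm that]]) simp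
  qed
  show "integrable M (\<lambda>\<omega>. exp (\<Sum>p\<in>S. \<alpha> p * real (Ycount n X p \<omega>)))"
    unfolding eq by (rule indep_vars_integrable[OF _ ind intg]) auto
  define c where "c = (\<Prod>p\<in>S. 1 + (exp (\<alpha> p) - 1) / real p)"
  have each: "(\<integral>\<omega>. exp (\<phi> (X i \<omega>)) \<partial>M) = c" if i: "i \<in> {1..n}" for i
  proof -
    have "(\<integral>\<omega>. exp (\<phi> (X i \<omega>)) \<partial>M) =
      (\<integral>\<omega>. (\<Prod>p\<in>S. 1 + (exp (\<alpha> p) - 1) * indicator {\<omega>\<in>space M. p dvd X i \<omega>} \<omega>) \<partial>M)"
    proof (rule Bochner_Integration.integral_cong[OF refl])
      fix \<omega> assume "\<omega> \<in> space M"
      then show "exp (\<phi> (X i \<omega>)) = (\<Prod>p\<in>S. 1 + (exp (\<alpha> p) - 1) * indicator {\<omega>\<in>space M. p dvd X i \<omega>} \<omega>)"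
        unfolding \<phi>_def exp_sum[OF fS] by (intro prod.cong refl) (auto simp: indicator_def)
    qed
    also have "\<dots> = (\<Prod>p\<in>S. 1 + (exp (\<alpha> p) - 1) * prob {\<omega>\<in>space M. p dvd X i \<omega>})"
      by (rule indep_events_prod_integral[OF tilde_facts(4)[OF tm i] S fS])
    also have "\<dots> = c" unfolding c_def
      using S tilde_facts(5)[OF tm i] by (intro prod.cong) auto
    finally show ?thesis .
  qed
  have "(\<integral>\<omega>. exp (\<Sum>p\<in>S. \<alpha> p * real (Ycount n X p \<omega>)) \<partial>M) = (\<Prod>i\<in>{1..n}. \<integral>\<omega>. exp (\<phi> (X i \<omega>)) \<partial>M)"
    unfolding eq by (rule indep_vars_lebesgue_integral[OF _ ind intg]) auto
  also have "\<dots> = c ^ n" using each by simp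
  also have "\<dots> = (\<Prod>p\<in>S. (1 + (exp (\<alpha> p) - 1) / real p) ^ n)"
    unfolding c_def by (simp add: prod_power_distrib)
  finally show "(\<integral>\<omega>. exp (\<Sum>p\<in>S. \<alpha> p * real (Ycount n X p \<omega>)) \<partial>M) = (\<Prod>p\<in>S. (1 + (exp (\<alpha> p) - 1) / real p) ^ n)" .
qed




lemma prod_split_T:
  fixes g h :: "nat \<Rightarrow> real"
  assumes "finite S" "T \<subseteq> S"
  shows "(\<Prod>p\<in>S. if p \<in> T then g p else h p) = (\<Prod>p\<in>T. g p) * (\<Prod>p\<in>S - T. h p)"
proof -
  have "(\<Prod>p\<in>S. if p \<in> T then g p else h p) = (\<Prod>p\<in>S - T. if p \<in> T then g p else h p) * (\<Prod>p\<in>T. if p \<in> T then g p else h p)"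
    by (rule prod.subset_diff[OF assms(2,1)])
  also have "\<dots> = (\<Prod>p\<in>S - T. h p) * (\<Prod>p\<in>T. g p)"
    by (intro arg_cong2[where f="(*)"] prod.cong) auto
  finally show ?thesis by simp
qed

lemma mgf_two:
  assumes tm: "tilde_model n M X" and S: "S \<subseteq> {p. prime p \<and> p \<le> n}"
  defines "m \<equiv> (\<lambda>p \<alpha>. (1 + (exp \<alpha> - 1) / real p) ^ n)"
  shows "integrable M (\<lambda>\<omega>. \<Prod>p\<in>S. A p * exp (a p * real (Ycount n X p \<omega>)) + B p * exp (b p * real (Ycount n X p \<omega>)))"
    and "(\<integral>\<omega>. (\<Prod>p\<in>S. A p * exp (a p * real (Ycount n X p \<omega>)) + B p * exp (b p * real (Ycount n X p \<omega>))) \<partial>M)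
         = (\<Prod>p\<in>S. A p * m p (a p) + B p * m p (b p))"
proof -
  have fS: "finite S" using S by (rule finite_subset) auto
  define \<beta> where "\<beta> T p = (if p \<in> T then a p else b p)" for T and p :: nat
  define K where "K T = (\<Prod>p\<in>T. A p) * (\<Prod>p\<in>S - T. B p)" for T
  have pw: "(\<Prod>p\<in>S. A p * exp (a p * real (Ycount n X p \<omega>)) + B p * exp (b p * real (Ycount n X p \<omega>)))
     = (\<Sum>T\<in>Pow S. K T * exp (\<Sum>p\<in>S. \<beta> T p * real (Ycount n X p \<omega>)))" for \<omega>
  proof -
    have "(\<Prod>p\<in>S. A p * exp (a p * real (Ycount n X p \<omega>)) + B p * exp (b p * real (Ycount n X p \<omega>)))
      = (\<Sum>T\<in>Pow S. (\<Prod>p\<in>T. A p * exp (a p * real (Ycount n X p \<omega>))) * (\<Prod>p\<in>S - T. B p * exp (b p * real (Ycount n X p \<omega>))))"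
      by (rule prod_add[OF fS])
    also have "\<dots> = (\<Sum>T\<in>Pow S. K T * exp (\<Sum>p\<in>S. \<beta> T p * real (Ycount n X p \<omega>)))"
    proof (rule sum.cong[OF refl])
      fix T assume "T \<in> Pow S"
      then have TS: "T \<subseteq> S" by auto
      have "exp (\<Sum>p\<in>S. \<beta> T p * real (Ycount n X p \<omega>)) = (\<Prod>p\<in>S. if p \<in> T then exp (a p * real (Ycount n X p \<omega>)) else exp (b p * real (Ycount n X p \<omega>)))"
        using fS by (simp add: exp_sum \<beta>_def) (intro prod.cong, auto)
      also have "\<dots> = (\<Prod>p\<in>T. exp (a p * real (Ycount n X p \<omega>))) * (\<Prod>p\<in>S - T. exp (b p * real (Ycount n X p \<omega>)))"
        by (rule prod_split_T[OF fS TS])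
      finally show "(\<Prod>p\<in>T. A p * exp (a p * real (Ycount n X p \<omega>))) * (\<Prod>p\<in>S - T. B p * exp (b p * real (Ycount n X p \<omega>)))
          = K T * exp (\<Sum>p\<in>S. \<beta> T p * real (Ycount n X p \<omega>))"
        unfolding K_def by (simp add: prod.distrib)
    qed
    finally show ?thesis .
  qed
  show "integrable M (\<lambda>\<omega>. \<Prod>p\<in>S. A p * exp (a p * real (Ycount n X p \<omega>)) + B p * exp (b p * real (Ycount n X p \<omega>)))"
    unfolding pw using mgf_Y(1)[OF tm S] by (intro Bochner_Integration.integrable_sum integrable_mult_right) auto
  have "(\<integral>\<omega>. (\<Prod>p\<in>S. A p * exp (a p * real (Ycount n X p \<omega>)) + B p * exp (b p * real (Ycount n X p \<omega>))) \<partial>M)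
      = (\<Sum>T\<in>Pow S. K T * (\<integral>\<omega>. exp (\<Sum>p\<in>S. \<beta> T p * real (Ycount n X p \<omega>)) \<partial>M))"
    unfolding pw using mgf_Y(1)[OF tm S] by (subst Bochner_Integration.integral_sum) auto
  also have "\<dots> = (\<Sum>T\<in>Pow S. K T * (\<Prod>p\<in>S. m p (\<beta> T p)))"
    unfolding mgf_Y(2)[OF tm S] m_def by simp
  also have "\<dots> = (\<Sum>T\<in>Pow S. (\<Prod>p\<in>T. A p * m p (a p)) * (\<Prod>p\<in>S - T. B p * m p (b p)))"
  proof (rule sum.cong[OF refl])
    fix T assume "T \<in> Pow S"
    then have TS: "T \<subseteq> S" by auto
    have "(\<Prod>p\<in>S. m p (\<beta> T p)) = (\<Prod>p\<in>S. if p \<in> T then m p (a p) else m p (b p))"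
      unfolding \<beta>_def by (intro prod.cong) auto
    also have "\<dots> = (\<Prod>p\<in>T. m p (a p)) * (\<Prod>p\<in>S - T. m p (b p))"
      by (rule prod_split_T[OF fS TS])
    finally show "K T * (\<Prod>p\<in>S. m p (\<beta> T p)) = (\<Prod>p\<in>T. A p * m p (a p)) * (\<Prod>p\<in>S - T. B p * m p (b p))"
      unfolding K_def by (simp add: prod.distrib)
  qed
  also have "\<dots> = (\<Prod>p\<in>S. A p * m p (a p) + B p * m p (b p))"
    by (rule prod_add[OF fS, symmetric])
  finally show "(\<integral>\<omega>. (\<Prod>p\<in>S. A p * exp (a p * real (Ycount n X p \<omega>)) + B p * exp (b p * real (Ycount n X p \<omega>))) \<partial>M)
         = (\<Prod>p\<in>S. A p * m p (a p) + B p * m p (b p))" .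
qed




lemma inv_sq_sum_aux:
  assumes "k \<ge> 1" "n \<ge> k"
  shows "(\<Sum>m\<in>{Suc k..n}. 1 / (real m)^2) \<le> 1 / real k - 1 / real n"
  using assms(2)
proof (induction n rule: dec_induct)
  case base then show ?case by simp
next
  case (step n)
  have nk: "real n \<ge> 1" using step assms by simp
  have "(\<Sum>m\<in>{Suc k..Suc n}. 1 / (real m)^2) = (\<Sum>m\<in>{Suc k..n}. 1 / (real m)^2) + 1 / (real (Suc n))^2"
    using step by (simp add: sum.cl_ivl_Suc)
  also have "\<dots> \<le> 1 / real k - 1 / real n + 1 / (real (Suc n))^2" using step.IH by simp
  also have "\<dots> \<le> 1 / real k - 1 / real (Suc n)"
  proof -
    have h1: "1 / (real n + 1)^2 \<le> 1 / (real n * (real n + 1))"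
      using nk by (intro divide_left_mono) (auto simp: power2_eq_square intro!: mult_right_mono)
    have h2: "1 / real n - 1 / (real n + 1) = 1 / (real n * (real n + 1))"
      using nk by (simp add: field_simps)
    have "1 / (real n + 1)^2 \<le> 1 / real n - 1 / (real n + 1)"
      using h1 h2 by simp
    then show ?thesis by (simp add: add.commute)
  qed
  finally show ?case .
qed

lemma inv_sq_sum:
  assumes "k \<ge> 1" "finite S" "S \<subseteq> {p. k < p \<and> p \<le> n}"
  shows "(\<Sum>p\<in>S. 1 / (real p)^2) \<le> 1 / real k"
proof -
  have "(\<Sum>p\<in>S. 1 / (real p)^2) \<le> (\<Sum>m\<in>{Suc k..n}. 1 / (real m)^2)"
    using assms by (intro sum_mono2) auto
  also have "\<dots> \<le> 1 / real k"
  proof (cases "n \<ge> k")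
    case True
    have "1 / real n \<ge> 0" by simp
    then show ?thesis using inv_sq_sum_aux[OF assms(1) True] by linarith
  next
    case False then show ?thesis by simp
  qed
  finally show ?thesis .
qed

lemma one_plus_pow_le_exp:
  fixes p :: nat and a :: real
  assumes "p \<ge> 1"
  shows "(1 + (exp a - 1) / real p) ^ n \<le> exp (real n * ((exp a - 1) / real p))"
proof -
  have "0 \<le> 1 + (exp a - 1) / real p"
  proof -
    have "-1 / real p \<ge> -1" using assms by (simp add: field_simps)
    moreover have "(exp a - 1) / real p \<ge> -1 / real p"
    proof (rule divide_right_mono)
      show "-1 \<le> exp a - 1" using exp_ge_zero[of a] by linarith
    qed simp
    ultimately show ?thesis by linarith
  qed
  then have "(1 + (exp a - 1) / real p) ^ n \<le> exp ((exp a - 1) / real p) ^ n"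
    by (intro power_mono) (simp_all add: exp_ge_add_one_self add.commute)
  also have "\<dots> = exp (real n * ((exp a - 1) / real p))" by (rule exp_of_nat_mult[symmetric])
  finally show ?thesis .
qed

lemma pointwise_split:
  fixes y lam C q nn :: real
  assumes "0 \<le> y" "y \<le> nn" "nn > 0" "lam \<ge> 0" "C > 0" "q > 0"
  shows "exp (lam * y^2 / nn) \<le> exp (lam * C * q * y) + exp (- (C * nn * q)) * exp ((lam + 1) * y)"
proof (cases "y \<le> C * nn * q")
  case True
  have "y^2 / nn \<le> C * q * y"
  proof -
    have "y * y \<le> (C * nn * q) * y" using True assms by (intro mult_right_mono) auto
    then show ?thesis using assms by (simp add: field_simps power2_eq_square)
  qed
  then have "lam * (y^2 / nn) \<le> lam * (C * q * y)" using assms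
    by (intro mult_left_mono) auto
  then have "lam * y^2 / nn \<le> lam * C * q * y" by (simp add: mult.assoc)
  then have "exp (lam * y^2 / nn) \<le> exp (lam * C * q * y)" by simp
  moreover have "0 \<le> exp (- (C * nn * q)) * exp ((lam + 1) * y)" by simp
  ultimately show ?thesis by linarith
next
  case False
  have "y^2 / nn \<le> y"
  proof -
    have "y * y \<le> nn * y" using assms by (intro mult_right_mono) auto
    then show ?thesis using assms by (simp add: field_simps power2_eq_square)
  qed
  then have "lam * (y^2 / nn) \<le> lam * y" using assms
    by (intro mult_left_mono) auto
  then have "lam * y^2 / nn \<le> - (C * nn * q) + (lam + 1) * y"
    using False by (simp add: algebra_simps)
  then have "exp (lam * y^2 / nn) \<le> exp (- (C * nn * q)) * exp ((lam + 1) * y)"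
    by (simp add: exp_add[symmetric])
  moreover have "0 \<le> exp (lam * C * q * y)" by simp
  ultimately show ?thesis by linarith
qed

lemma k_eventually:
  "eventually (\<lambda>k::nat. ln (real k) / 8 * exp (ln (real k) / 8 + 1) \<le> real k / 2) sequentially"
proof -
  have "eventually (\<lambda>x::real. ln x / 8 * exp (ln x / 8 + 1) \<le> x / 2) at_top"
    by real_asymp
  then show ?thesis
    using filterlim_real_sequentially by (rule eventually_compose_filterlim)
qed




lemma Y_meas:
  assumes tm: "tilde_model n M X"
  shows "(\<lambda>\<omega>. real (Ycount n X p \<omega>)) \<in> borel_measurable M"
proof -
  have eq: "(\<lambda>\<omega>. real (Ycount n X p \<omega>)) = (\<lambda>\<omega>. \<Sum>i\<in>{1..n}. of_bool (p dvd X i \<omega>))"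
    unfolding Ycount_def by (intro ext card_filter_sum) simp
  show ?thesis unfolding eq
    by (intro borel_measurable_sum measurable_compose[OF tilde_facts(3)[OF tm]]) auto
qed

lemma Y_le:
  "real (Ycount n X p \<omega>) \<le> real n"
proof -
  have "Ycount n X p \<omega> \<le> card {1..n}" unfolding Ycount_def by (intro card_mono) auto
  then show ?thesis by simp
qed

lemma big_event_sets:
  assumes tm: "tilde_model n M X"
  shows "big_event n k \<epsilon> M X \<in> sets M"
proof -
  have "(\<lambda>\<omega>. \<Sum>p\<in>Sprimes k n. real (Ycount n X p \<omega>) ^ 2) \<in> borel_measurable M"
    using Y_meas[OF tm] by (intro borel_measurable_sum borel_measurable_power) auto
  then show ?thesis unfolding big_event_def borel_measurable_iff_greater by blast
qed




lemma main_bound: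
  assumes tm: "tilde_model n M X" and n1: "n \<ge> 1" and k1: "k \<ge> 1"
    and kcond: "ln (real k) / 8 * exp (ln (real k) / 8 + 1) \<le> real k / 2" and eps: "\<epsilon> > 0"
  shows "measure M (big_event n k \<epsilon> M X) \<le> exp (real n * (ln 2 + 1 - \<epsilon> * (ln (real k) / 8)))"
proof -
  interpret prob_space M using tilde_facts(1)[OF tm] .
  define lam where "lam = ln (real k) / 8"
  define C where "C = exp (lam + 1)"
  define S where "S = Sprimes k n"
  define Y where "Y p \<omega> = real (Ycount n X p \<omega>)" for p \<omega>
  define E where "E = big_event n k \<epsilon> M X"
  define a where "a p = lam * C * (1 / real p)" for p :: nat
  define B where "B p = exp (- (C * real n * (1 / real p)))" for p :: nat
  define m where "m p \<alpha> = (1 + (exp \<alpha> - 1) / real p) ^ n" for p :: nat and \<alpha>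
  define G where "G \<omega> = (\<Prod>p\<in>S. (\<lambda>_. 1) p * exp (a p * Y p \<omega>) + B p * exp ((\<lambda>_. lam + 1) p * Y p \<omega>))" for \<omega>
  have SP: "S \<subseteq> {p. prime p \<and> p \<le> n}" unfolding S_def Sprimes_def by auto
  have fS: "finite S" using SP by (rule finite_subset) auto
  have lam0: "lam \<ge> 0" unfolding lam_def using k1 by simp
  have C0: "C > 0" unfolding C_def by simp
  have lamC: "lam * C \<le> real k / 2" using kcond unfolding lam_def C_def .
  have nR: "real n > 0" using n1 by simp
  have pk: "real p > real k" if "p \<in> S" for p using that unfolding S_def Sprimes_def by auto
  have Gint: "integrable M G" unfolding G_def Y_def by (rule mgf_two(1)[OF tm SP])
  have Gval: "(\<integral>\<omega>. G \<omega> \<partial>M) = (\<Prod>p\<in>S. 1 * m p (a p) + B p * m p (lam + 1))"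
    unfolding G_def Y_def m_def by (rule mgf_two(2)[OF tm SP])
  have G0: "G \<omega> \<ge> 0" for \<omega> unfolding G_def B_def by (intro prod_nonneg) auto
  have Eset: "E \<in> sets M" unfolding E_def by (rule big_event_sets[OF tm])
  have ind_le: "indicator E \<omega> \<le> exp (- (lam * real n * \<epsilon>)) * G \<omega>" if "\<omega> \<in> space M" for \<omega>
  proof (cases "\<omega> \<in> E")
    case False then show ?thesis using G0[of \<omega>] by simp
  next
    case True
    then have big: "(\<Sum>p\<in>S. Y p \<omega> ^ 2) > real n ^ 2 * \<epsilon>"
      unfolding E_def big_event_def S_def Y_def by auto
    have "(\<Prod>p\<in>S. exp (lam * (Y p \<omega>)^2 / real n)) \<le> G \<omega>"
      unfolding G_def
    proof (rule prod_mono, safe)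
      fix p assume pS: "p \<in> S"
      have p0: "real p > 0" using pk[OF pS] k1 by simp
      show "0 \<le> exp (lam * (Y p \<omega>)\<^sup>2 / real n)" by simp
      have "exp (lam * (Y p \<omega>)^2 / real n) \<le> exp (lam * C * (1 / real p) * Y p \<omega>) + exp (- (C * real n * (1 / real p))) * exp ((lam + 1) * Y p \<omega>)"
        by (rule pointwise_split) (use lam0 C0 nR p0 Y_le[of n X p \<omega>] in \<open>auto simp: Y_def\<close>)
      then show "exp (lam * (Y p \<omega>)\<^sup>2 / real n) \<le> 1 * exp (a p * Y p \<omega>) + B p * exp ((lam + 1) * Y p \<omega>)"
        unfolding a_def B_def by simp
    qed
    moreover have "(\<Prod>p\<in>S. exp (lam * (Y p \<omega>)^2 / real n)) = exp (lam * (\<Sum>p\<in>S. Y p \<omega> ^ 2) / real n)"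
    proof -
      have "lam * (\<Sum>p\<in>S. Y p \<omega> ^ 2) / real n = (\<Sum>p\<in>S. lam * (Y p \<omega>)^2 / real n)"
        by (simp add: sum_distrib_left sum_divide_distrib)
      then show ?thesis by (simp add: exp_sum[OF fS])
    qed
    moreover have "lam * (\<Sum>p\<in>S. Y p \<omega> ^ 2) / real n \<ge> lam * real n * \<epsilon>"
    proof -
      have "(\<Sum>p\<in>S. Y p \<omega> ^ 2) / real n \<ge> real n * \<epsilon>"
        using big nR by (simp add: field_simps power2_eq_square)
      then have "lam * ((\<Sum>p\<in>S. Y p \<omega> ^ 2) / real n) \<ge> lam * (real n * \<epsilon>)"
        using lam0 by (intro mult_left_mono) auto
      then show ?thesis by (simp add: mult.assoc)
    qed
    ultimately have "exp (lam * real n * \<epsilon>) \<le> G \<omega>"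
      by (metis (no_types, lifting) exp_le_cancel_iff order_trans)
    then have "1 \<le> exp (- (lam * real n * \<epsilon>)) * G \<omega>"
      by (simp add: exp_minus field_simps)
    then show ?thesis using True by simp
  qed
  have "measure M E = (\<integral>\<omega>. indicator E \<omega> \<partial>M)"
    using Eset sets.sets_into_space by (simp add: Int_absorb2)
  also have "\<dots> \<le> (\<integral>\<omega>. exp (- (lam * real n * \<epsilon>)) * G \<omega> \<partial>M)"
  proof (rule integral_mono)
    show "integrable M (indicator E :: 'a \<Rightarrow> real)"
      by (rule integrable_const_bound[where B=1]) (use Eset in auto)
    show "integrable M (\<lambda>\<omega>. exp (- (lam * real n * \<epsilon>)) * G \<omega>)" using Gint by simp
  qed (use ind_le in auto)
  also have "\<dots> = exp (- (lam * real n * \<epsilon>)) * (\<Prod>p\<in>S. 1 * m p (a p) + B p * m p (lam + 1))"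
    using Gval by simp
  also have "\<dots> \<le> exp (- (lam * real n * \<epsilon>)) * (\<Prod>p\<in>S. 2 * exp (2 * lam * C * real n * (1 / (real p)^2)))"
  proof (intro mult_left_mono prod_mono conjI)
    fix p assume pS: "p \<in> S"
    have p1: "p \<ge> 1" using pk[OF pS] k1 by simp
    have p0: "real p > 0" using p1 by simp
    have a0: "a p \<ge> 0" unfolding a_def using lam0 C0 by simp
    have ahalf: "a p \<le> 1/2"
    proof -
      have "a p = lam * C / real p" unfolding a_def by simp
      also have "\<dots> \<le> (real k / 2) / real p" using lamC p0 by (intro divide_right_mono) auto
      also have "\<dots> \<le> 1/2" using pk[OF pS] p0 by (simp add: field_simps)
      finally show ?thesis .
    qed
    have m_ge: "m p (a p) \<ge> 1" unfolding m_def
      using a0 p0 by (intro one_le_power) auto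
    have "m p (a p) \<le> exp (real n * ((exp (a p) - 1) / real p))"
      unfolding m_def by (rule one_plus_pow_le_exp[OF p1])
    also have "\<dots> \<le> exp (real n * ((2 * a p) / real p))"
      using real_exp_bound_lemma[OF a0 ahalf] p0 nR
      by (intro exp_mono mult_left_mono divide_right_mono) auto
    also have "\<dots> = exp (2 * lam * C * real n * (1 / (real p)^2))"
      unfolding a_def by (simp add: power2_eq_square field_simps)
    finally have m_le: "m p (a p) \<le> exp (2 * lam * C * real n * (1 / (real p)^2))" .
    have "B p * m p (lam + 1) \<le> exp (- (C * real n * (1 / real p))) * exp (real n * ((exp (lam + 1) - 1) / real p))"
      unfolding B_def m_def by (intro mult_left_mono one_plus_pow_le_exp[OF p1]) auto
    also have "\<dots> = exp (- (real n / real p))"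
    proof -
      have "- (C * real n * (1 / real p)) + real n * ((exp (lam + 1) - 1) / real p) = - (real n / real p)"
        unfolding C_def using p0 by (simp add: field_simps)
      then show ?thesis by (simp add: exp_add[symmetric])
    qed
    also have "\<dots> \<le> 1" using nR p0 by simp
    finally have "B p * m p (lam + 1) \<le> 1" .
    then show "1 * m p (a p) + B p * m p (lam + 1) \<le> 2 * exp (2 * lam * C * real n * (1 / (real p)^2))"
      using m_ge m_le by linarith
    have "m p (lam + 1) \<ge> 1" unfolding m_def
      using lam0 p0 by (intro one_le_power) auto
    moreover have "B p \<ge> 0" unfolding B_def by simp
    ultimately have "B p * m p (lam + 1) \<ge> 0" by simp
    then show "0 \<le> 1 * m p (a p) + B p * m p (lam + 1)"
      using m_ge by linarith
  qed simp
  also have "\<dots> = exp (- (lam * real n * \<epsilon>)) * (2 ^ card S * exp (2 * lam * C * real n * (\<Sum>p\<in>S. 1 / (real p)^2)))"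
    using fS by (simp add: prod.distrib exp_sum[symmetric] sum_distrib_left)
  also have "\<dots> \<le> exp (- (lam * real n * \<epsilon>)) * (2 ^ n * exp (real n))"
  proof (intro mult_left_mono mult_mono)
    have "card S \<le> card {1..n}" using SP unfolding S_def Sprimes_def
      by (intro card_mono) (auto simp: prime_ge_1_nat)
    then show "(2::real) ^ card S \<le> 2 ^ n" by (intro power_increasing) auto
    have "(\<Sum>p\<in>S. 1 / (real p)^2) \<le> 1 / real k"
      using k1 fS by (intro inv_sq_sum[where n=n]) (auto simp: S_def Sprimes_def)
    then have "2 * lam * C * real n * (\<Sum>p\<in>S. 1 / (real p)^2) \<le> 2 * lam * C * real n * (1 / real k)"
      using lam0 C0 nR by (intro mult_left_mono) auto
    also have "\<dots> \<le> real n"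
    proof -
      have "2 * lam * C / real k \<le> 1" using lamC k1 by (simp add: field_simps)
      then have "real n * (2 * lam * C / real k) \<le> real n * 1" using nR by (intro mult_left_mono) auto
      then show ?thesis by (simp add: field_simps)
    qed
    finally show "exp (2 * lam * C * real n * (\<Sum>p\<in>S. 1 / (real p)^2)) \<le> exp (real n)" by simp
  qed auto
  also have "\<dots> = exp (real n * (ln 2 + 1 - \<epsilon> * lam))"
  proof -
    have "(2::real) ^ n = exp (real n * ln 2)" by (simp add: exp_of_nat_mult)
    then show ?thesis by (simp add: exp_add[symmetric] field_simps)
  qed
  finally show ?thesis unfolding E_def lam_def .
qed




lemma eln_bound:
  assumes "P \<ge> 0" "P \<le> exp (real n * (ln 2 + 1 - \<epsilon> * (ln (real k) / 8)))" "n \<ge> 1"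
  shows "eln P / ereal (real n) \<le> ereal (- (\<epsilon> / 8) * ln (real k) + 4)"
proof (cases "P = 0")
  case True
  then show ?thesis using assms(3) by (simp add: eln_def divide_ereal_def)
next
  case False
  then have P0: "P > 0" using assms(1) by simp
  have nR: "real n > 0" using assms(3) by simp
  have "ln P \<le> real n * (ln 2 + 1 - \<epsilon> * (ln (real k) / 8))"
    using assms(2) P0 by (metis ln_exp ln_mono exp_gt_zero)
  then have "ln P / real n \<le> ln 2 + 1 - \<epsilon> * (ln (real k) / 8)"
    using nR by (simp add: field_simps)
  also have "\<dots> \<le> - (\<epsilon> / 8) * ln (real k) + 4"
    using ln_2_less_1 by simp
  finally have le: "ln P / real n \<le> - (\<epsilon> / 8) * ln (real k) + 4" .
  have "eln P / ereal (real n) = ereal (ln P / real n)"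
    using False nR by (simp add: eln_def divide_ereal_def divide_inverse)
  then show ?thesis using le by simp
qed

theorem theorem3p5:
  fixes \<epsilon> :: real
  assumes "\<epsilon> > 0"
  shows "(\<exists>K. \<forall>k\<ge>K. \<exists>N. \<forall>n\<ge>N. \<forall>(M::'a measure) X. tilde_model n M X \<longrightarrow>
            eln (measure M (big_event n k \<epsilon> M X)) / ereal (real n)
              \<le> ereal (- (\<epsilon> / 8) * ln (real k) + 4))
       \<and> (\<forall>(Ms::nat \<Rightarrow> 'a measure) Xs. (\<forall>n\<ge>1. tilde_model n (Ms n) (Xs n)) \<longrightarrow>
            limsup (\<lambda>k. limsup (\<lambda>n. eln (measure (Ms n) (big_event n k \<epsilon> (Ms n) (Xs n)))
                                        / ereal (real n))) = -\<infinity>)"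
proof -
  obtain K0 where K0: "\<And>k. k \<ge> K0 \<Longrightarrow> ln (real k) / 8 * exp (ln (real k) / 8 + 1) \<le> real k / 2"
    using k_eventually unfolding eventually_sequentially by blast
  define K where "K = max K0 1"
  have bnd: "eln (measure M (big_event n k \<epsilon> M X)) / ereal (real n) \<le> ereal (- (\<epsilon> / 8) * ln (real k) + 4)"
    if "k \<ge> K" "n \<ge> 1" "tilde_model n M X" for k n and M :: "'a measure" and X
  proof (rule eln_bound)
    show "0 \<le> measure M (big_event n k \<epsilon> M X)" by simp
    show "measure M (big_event n k \<epsilon> M X) \<le> exp (real n * (ln 2 + 1 - \<epsilon> * (ln (real k) / 8)))"
      using that K0[of k] assms unfolding K_def by (intro main_bound) auto
  qed (use that in auto)
  have part1: "\<exists>K. \<forall>k\<ge>K. \<exists>N. \<forall>n\<ge>N. \<forall>(M::'a measure) X. tilde_model n M X \<longrightarrow>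
            eln (measure M (big_event n k \<epsilon> M X)) / ereal (real n)
              \<le> ereal (- (\<epsilon> / 8) * ln (real k) + 4)"
    using bnd by blast
  have part2: "limsup (\<lambda>k. limsup (\<lambda>n. eln (measure (Ms n) (big_event n k \<epsilon> (Ms n) (Xs n)))
                                        / ereal (real n))) = -\<infinity>"
    if tm: "\<forall>n\<ge>1. tilde_model n (Ms n) (Xs n)" for Ms :: "nat \<Rightarrow> 'a measure" and Xs
  proof (rule ereal_bot)
    fix B :: real
    have lnlim: "filterlim (\<lambda>k::nat. ln (real k)) at_top sequentially"
      by (rule filterlim_compose[OF ln_at_top filterlim_real_sequentially])
    then have ev1: "eventually (\<lambda>k::nat. ln (real k) \<ge> 8 * (4 - B) / \<epsilon>) sequentially"
      by (simp add: filterlim_at_top)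
    have ev: "eventually (\<lambda>k::nat. k \<ge> K \<and> - (\<epsilon> / 8) * ln (real k) + 4 \<le> B) sequentially"
    proof -
      have hyp: "- (\<epsilon> / 8) * ln (real k) + 4 \<le> B" if "ln (real k) \<ge> 8 * (4 - B) / \<epsilon>" for k :: nat
      proof -
        have "\<epsilon> * ln (real k) \<ge> 8 * (4 - B)" using that assms by (simp add: field_simps)
        then show ?thesis by simp
      qed
      show ?thesis using eventually_conj[OF eventually_ge_at_top[of K] ev1]
        by (rule eventually_mono) (use hyp in blast)
    qed
    show "limsup (\<lambda>k. limsup (\<lambda>n. eln (measure (Ms n) (big_event n k \<epsilon> (Ms n) (Xs n)))
                                        / ereal (real n))) \<le> ereal B"
    proof (rule Limsup_bounded)
      show "eventually (\<lambda>k. limsup (\<lambda>n. eln (measure (Ms n) (big_event n k \<epsilon> (Ms n) (Xs n)))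
                                        / ereal (real n)) \<le> ereal B) sequentially"
        using ev
      proof (rule eventually_mono)
        fix k :: nat assume k: "k \<ge> K \<and> - (\<epsilon> / 8) * ln (real k) + 4 \<le> B"
        have "limsup (\<lambda>n. eln (measure (Ms n) (big_event n k \<epsilon> (Ms n) (Xs n))) / ereal (real n))
              \<le> ereal (- (\<epsilon> / 8) * ln (real k) + 4)"
        proof (rule Limsup_bounded)
          show "eventually (\<lambda>n. eln (measure (Ms n) (big_event n k \<epsilon> (Ms n) (Xs n))) / ereal (real n)
                \<le> ereal (- (\<epsilon> / 8) * ln (real k) + 4)) sequentially"
            using eventually_ge_at_top[of 1]
            by (rule eventually_mono) (use k tm bnd in auto)
        qed
        also have "\<dots> \<le> ereal B" using k by simp
        finally show "limsup (\<lambda>n. eln (measure (Ms n) (big_event n k \<epsilon> (Ms n) (Xs n))) / ereal (real n)) \<le> ereal B" .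
      qed
    qed
  qed
  show ?thesis using part1 part2 by blast
qed


end
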